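(* Let $(G,O)$ be an equipped group such that the elements of $O$ generate $G$ and $O$ consists of a single conjugacy class, and let $\widehat G$ be the associated $C$-group. Then $\widehat G$ is isomorphic to a semidirect product $[\widehat G,\widehat G]\rtimes\mathbb Z$.
   Context: An equipped group is a pair $(G,O)$, $G$ a group, $O\subset G$ a union of finitely many conjugacy classes, $1\notin O$. The associated $C$-group $\widehat G$ (the $C$-group equivalent to $(G,O)$) is the group with generators $y_g$ ($g\in O$) and relations $y_h^{-1}y_gy_h=y_{h^{-1}gh}$ for all $g,h\in O$. *)

theory Defs
  imports "HOL-Algebra.Algebra"
begin

definition conj_class :: "('a, 'b) monoid_scheme \<Rightarrow> 'a \<Rightarrow> 'a set" where
  "conj_class G g = {inv\<^bsub>G\<^esub> h \<otimes>\<^bsub>G\<^esub> g \<otimes>\<^bsub>G\<^esub> h | h. h \<in> carrier G}"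

definition equipped_group :: "('a, 'b) monoid_scheme \<Rightarrow> 'a set \<Rightarrow> bool" where
  "equipped_group G Ocl \<longleftrightarrow> group G \<and> \<one>\<^bsub>G\<^esub> \<notin> Ocl \<and>
     (\<exists>C. finite C \<and> C \<subseteq> carrier G \<and> Ocl = (\<Union>g\<in>C. conj_class G g))"

text \<open>Words in the generators: a letter (x, False) stands for x, (x, True) for x inverse.\<close>
type_synonym 'a word = "('a \<times> bool) list"

definition words :: "'a set \<Rightarrow> 'a word set" where
  "words S = lists (S \<times> UNIV)"

inductive pres_eq :: "'a set \<Rightarrow> ('a word \<times> 'a word) set \<Rightarrow> 'a word \<Rightarrow> 'a word \<Rightarrow> bool"
  for S :: "'a set" and Rel :: "('a word \<times> 'a word) set" where
  refl: "w \<in> words S \<Longrightarrow> pres_eq S Rel w w"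
| sym: "pres_eq S Rel u v \<Longrightarrow> pres_eq S Rel v u"
| trans: "pres_eq S Rel u v \<Longrightarrow> pres_eq S Rel v w \<Longrightarrow> pres_eq S Rel u w"
| cancel: "u \<in> words S \<Longrightarrow> v \<in> words S \<Longrightarrow> x \<in> S \<Longrightarrow>
     pres_eq S Rel (u @ [(x, b), (x, \<not> b)] @ v) (u @ v)"
| rel: "(l, r) \<in> Rel \<Longrightarrow> l \<in> words S \<Longrightarrow> r \<in> words S \<Longrightarrow> u \<in> words S \<Longrightarrow> v \<in> words S \<Longrightarrow>
     pres_eq S Rel (u @ l @ v) (u @ r @ v)"

definition pres_class :: "'a set \<Rightarrow> ('a word \<times> 'a word) set \<Rightarrow> 'a word \<Rightarrow> 'a word set" where
  "pres_class S Rel w = {v. pres_eq S Rel w v}"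

definition presented_group :: "'a set \<Rightarrow> ('a word \<times> 'a word) set \<Rightarrow> 'a word set monoid" where
  "presented_group S Rel =
    \<lparr> carrier = pres_class S Rel ` words S,
      monoid.mult = (\<lambda>A B. {w. \<exists>a\<in>A. \<exists>b\<in>B. pres_eq S Rel (a @ b) w}),
      one = pres_class S Rel [] \<rparr>"

text \<open>The C-group associated with (G,Ocl): generators y_g (g in Ocl), relations
  y_h^-1 y_g y_h = y_(h^-1 g h) for all g, h in Ocl.\<close>
definition C_group_rels :: "('a, 'b) monoid_scheme \<Rightarrow> 'a set \<Rightarrow> ('a word \<times> 'a word) set" where
  "C_group_rels G Ocl =
    {([(h, True), (g, False), (h, False)], [(inv\<^bsub>G\<^esub> h \<otimes>\<^bsub>G\<^esub> g \<otimes>\<^bsub>G\<^esub> h, False)]) | g h. g \<in> Ocl \<and> h \<in> Ocl}"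

definition C_group :: "('a, 'b) monoid_scheme \<Rightarrow> 'a set \<Rightarrow> 'a word set monoid" where
  "C_group G Ocl = presented_group Ocl (C_group_rels G Ocl)"

definition semidirect_product ::
  "('a, 'c) monoid_scheme \<Rightarrow> ('b, 'd) monoid_scheme \<Rightarrow> ('b \<Rightarrow> 'a \<Rightarrow> 'a) \<Rightarrow> ('a \<times> 'b) monoid" where
  "semidirect_product N H \<phi> =
    \<lparr> carrier = carrier N \<times> carrier H,
      monoid.mult = (\<lambda>(n, a) (m, b). (n \<otimes>\<^bsub>N\<^esub> \<phi> a m, a \<otimes>\<^bsub>H\<^esub> b)),
      one = (\<one>\<^bsub>N\<^esub>, \<one>\<^bsub>H\<^esub>) \<rparr>"

end

theory Submission imports Defs begin

lemma (in group) canc1 [simp]: "x \<in> carrier G \<Longrightarrow> y \<in> carrier G \<Longrightarrow> inv x \<otimes> (x \<otimes> y) = y"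
  by (simp add: m_assoc[symmetric])
lemma (in group) canc2 [simp]: "x \<in> carrier G \<Longrightarrow> y \<in> carrier G \<Longrightarrow> x \<otimes> (inv x \<otimes> y) = y"
  by (simp add: m_assoc[symmetric])

lemma (in group) abstract_split:
  assumes E: "E \<in> hom G integer_group" and t: "t \<in> carrier G" and Et: "E t = 1"
    and ker: "\<And>x. x \<in> carrier G \<Longrightarrow> E x = 0 \<Longrightarrow> x \<in> derived G (carrier G)"
  shows "\<exists>\<phi>. \<phi> \<in> hom integer_group (AutoGroup (G\<lparr>carrier := derived G (carrier G)\<rparr>))
     \<and> G \<cong> semidirect_product (G\<lparr>carrier := derived G (carrier G)\<rparr>) integer_group \<phi>"
proof -
  define D where "D = derived G (carrier G)"
  interpret EH: group_hom G integer_group E using E by (simp add: group_hom_def group_hom_axioms_def is_group)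
  have Dn: "D \<lhd> G" unfolding D_def by (rule derived_self_is_normal)
  interpret DN: normal D G by (rule Dn)
  have Dc: "D \<subseteq> carrier G" by (rule DN.subset)
  have Dc': "x \<in> carrier G" if "x \<in> D" for x using that Dc by blast
  have Dker: "E x = 0" if "x \<in> D" for x
  proof -
    have "derived_set G (carrier G) \<subseteq> kernel G integer_group E"
      by (auto simp: kernel_def)
    then have "D \<subseteq> kernel G integer_group E"
      unfolding D_def derived_def by (rule generate_subgroup_incl[OF _ EH.subgroup_kernel])
    with that show ?thesis by (auto simp: kernel_def)
  qed
  have ker': "x \<in> D" if "x \<in> carrier G" "E x = 0" for x using ker that D_def by blast
  define p where "p = (\<lambda>a::int. t [^] a)"
  have pc[simp]: "p a \<in> carrier G" for a using t by (simp add: p_def)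
  have padd: "p (a + b) = p a \<otimes> p b" for a b using t by (simp add: p_def int_pow_mult)
  have pneg: "p (- a) = inv (p a)" for a using t by (simp add: p_def int_pow_neg)
  have Ep: "E (p a) = a" for a
  proof -
    have "E (p a) = a * E t" unfolding p_def using t EH.hom_int_pow[of t a] by simp
    with Et show ?thesis by simp
  qed
  define \<phi> where "\<phi> = (\<lambda>a::int. \<lambda>m\<in>D. p a \<otimes> m \<otimes> inv (p a))"
  have \<phi>D: "\<phi> a m \<in> D" if "m \<in> D" for a m
    using that DN.inv_op_closed2[of "p a" m] by (simp add: \<phi>_def)
  have \<phi>inv: "\<phi> (-a) (\<phi> a m) = m" if "m \<in> D" for a m
    using that \<phi>D[OF that, of a] Dc'[OF that]
    by (simp add: \<phi>_def pneg m_assoc)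
  have \<phi>inv2: "\<phi> a (\<phi> (-a) m) = m" if "m \<in> D" for a m
    using \<phi>inv[OF that, of "-a"] by simp
  have bij: "bij_betw (\<phi> a) D D" for a
    by (rule bij_betw_byWitness[where f'="\<phi> (-a)"]) (auto simp: \<phi>inv \<phi>inv2 \<phi>D)
  have \<phi>mult: "\<phi> a (x \<otimes> y) = \<phi> a x \<otimes> \<phi> a y" if "x \<in> D" "y \<in> D" for a x y
    using that Dc' DN.m_closed[OF that] by (simp add: \<phi>_def m_assoc)
  have auto: "\<phi> a \<in> auto (G\<lparr>carrier := D\<rparr>)" for a
    unfolding auto_def Bij_def
    using bij[of a] \<phi>D \<phi>mult by (auto simp: hom_def \<phi>_def)
  have \<phi>hom: "\<phi> \<in> hom integer_group (AutoGroup (G\<lparr>carrier := D\<rparr>))"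
  proof (rule homI)
    fix a show "\<phi> a \<in> carrier (AutoGroup (G\<lparr>carrier := D\<rparr>))"
      using auto by (simp add: AutoGroup_def)
  next
    fix a b :: int
    have "\<phi> a \<in> Bij D" "\<phi> b \<in> Bij D" using auto by (auto simp: auto_def)
    moreover have "\<phi> (a + b) = compose D (\<phi> a) (\<phi> b)"
    proof
      fix x show "\<phi> (a + b) x = compose D (\<phi> a) (\<phi> b) x"
        using \<phi>D[of x b] Dc'[of x]
        by (cases "x \<in> D") (auto simp: compose_def \<phi>_def padd m_assoc inv_mult_group)
    qed
    ultimately show "\<phi> (a \<otimes>\<^bsub>integer_group\<^esub> b) = \<phi> a \<otimes>\<^bsub>AutoGroup (G\<lparr>carrier := D\<rparr>)\<^esub> \<phi> b"
      by (simp add: AutoGroup_def BijGroup_def)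
  qed
  define f where "f = (\<lambda>x. (x \<otimes> p (- E x), E x))"
  have fD: "x \<otimes> p (- E x) \<in> D" if "x \<in> carrier G" for x
    using that by (intro ker') (simp_all add: Ep)
  have "f \<in> iso G (semidirect_product (G\<lparr>carrier := D\<rparr>) integer_group \<phi>)"
    unfolding iso_def
  proof (intro CollectI conjI)
    show "f \<in> hom G (semidirect_product (G\<lparr>carrier := D\<rparr>) integer_group \<phi>)"
    proof (rule homI)
      fix x assume "x \<in> carrier G"
      then show "f x \<in> carrier (semidirect_product (G\<lparr>carrier := D\<rparr>) integer_group \<phi>)"
        using fD by (simp add: f_def semidirect_product_def)
    next
      fix x y assume x: "x \<in> carrier G" and y: "y \<in> carrier G"
      have "\<phi> (E x) (y \<otimes> p (- E y)) = p (E x) \<otimes> (y \<otimes> p (- E y)) \<otimes> inv (p (E x))"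
        using fD[OF y] by (simp add: \<phi>_def)
      moreover have "inv (p (E x + E y)) = inv (p (E y)) \<otimes> inv (p (E x))"
        using padd[of "E x" "E y"] by (simp add: inv_mult_group)
      ultimately show "f (x \<otimes> y) = f x \<otimes>\<^bsub>semidirect_product (G\<lparr>carrier := D\<rparr>) integer_group \<phi>\<^esub> f y"
        using x y by (simp add: f_def semidirect_product_def m_assoc pneg)
    qed
  next
    show "bij_betw f (carrier G) (carrier (semidirect_product (G\<lparr>carrier := D\<rparr>) integer_group \<phi>))"
    proof (rule bij_betw_byWitness[where f'="\<lambda>(n, a). n \<otimes> p a"])
      show "\<forall>x\<in>carrier G. (\<lambda>(n, a). n \<otimes> p a) (f x) = x"
        by (simp add: f_def m_assoc pneg)
      show "\<forall>y\<in>carrier (semidirect_product (G\<lparr>carrier := D\<rparr>) integer_group \<phi>). f ((\<lambda>(n, a). n \<otimes> p a) y) = y"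
      proof (clarsimp simp: semidirect_product_def)
        fix n a assume n: "n \<in> D"
        have "E (n \<otimes> p a) = a" using n Dker Dc' Ep by simp
        then show "f (n \<otimes> p a) = (n, a)"
          using n Dc' by (simp add: f_def m_assoc pneg)
      qed
      show "f ` carrier G \<subseteq> carrier (semidirect_product (G\<lparr>carrier := D\<rparr>) integer_group \<phi>)"
        using fD by (auto simp: f_def semidirect_product_def)
      show "(\<lambda>(n, a). n \<otimes> p a) ` carrier (semidirect_product (G\<lparr>carrier := D\<rparr>) integer_group \<phi>) \<subseteq> carrier G"
        using Dc' by (auto simp: semidirect_product_def)
    qed
  qed
  then show ?thesis using \<phi>hom unfolding D_def is_iso_def by blast
qed

lemma words_append[simp]: "u @ v \<in> words S \<longleftrightarrow> u \<in> words S \<and> v \<in> words S"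
  by (auto simp: words_def)
lemma words_Cons[simp]: "x # v \<in> words S \<longleftrightarrow> fst x \<in> S \<and> v \<in> words S"
  by (cases x) (auto simp: words_def)
lemma words_Nil[simp]: "[] \<in> words S"
  by (auto simp: words_def)

lemma pres_eq_words: "pres_eq S R u v \<Longrightarrow> u \<in> words S \<and> v \<in> words S"
  by (induction rule: pres_eq.induct) auto

lemma pres_eq_app_right: "pres_eq S R u v \<Longrightarrow> w \<in> words S \<Longrightarrow> pres_eq S R (u @ w) (v @ w)"
proof (induction rule: pres_eq.induct)
  case (refl w') then show ?case by (auto intro: pres_eq.refl)
next
  case (sym u v) then show ?case by (auto intro: pres_eq.sym)
next
  case (trans u v w') then show ?case by (auto intro: pres_eq.trans)
next
  case (cancel u v x b) then show ?case using pres_eq.cancel[of u S "v @ w" x R b] by simp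
next
  case (rel l r u v) then show ?case using pres_eq.rel[of l r R S u "v @ w"] by simp
qed

lemma pres_eq_app_left: "pres_eq S R u v \<Longrightarrow> w \<in> words S \<Longrightarrow> pres_eq S R (w @ u) (w @ v)"
proof (induction rule: pres_eq.induct)
  case (refl w') then show ?case by (auto intro: pres_eq.refl)
next
  case (sym u v) then show ?case by (auto intro: pres_eq.sym)
next
  case (trans u v w') then show ?case by (auto intro: pres_eq.trans)
next
  case (cancel u v x b) then show ?case using pres_eq.cancel[of "w @ u" S v x R b] by simp
next
  case (rel l r u v) then show ?case using pres_eq.rel[of l r R S "w @ u" v] by simp
qed

lemma pres_eq_app: "pres_eq S R a a' \<Longrightarrow> pres_eq S R b b' \<Longrightarrow> pres_eq S R (a @ b) (a' @ b')"
  by (meson pres_eq.trans pres_eq_app_left pres_eq_app_right pres_eq_words)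

lemma class_eq_iff: "u \<in> words S \<Longrightarrow> pres_class S R u = pres_class S R v \<longleftrightarrow> pres_eq S R u v"
proof
  assume u: "u \<in> words S" and "pres_class S R u = pres_class S R v"
  moreover have "u \<in> pres_class S R u" using u by (simp add: pres_class_def pres_eq.refl)
  ultimately show "pres_eq S R u v"
    by (auto simp: pres_class_def intro: pres_eq.sym)
next
  assume "pres_eq S R u v" then show "pres_class S R u = pres_class S R v"
    by (auto simp: pres_class_def intro: pres_eq.trans pres_eq.sym)
qed

lemma pg_mult: "u \<in> words S \<Longrightarrow> v \<in> words S \<Longrightarrow>
   pres_class S R u \<otimes>\<^bsub>presented_group S R\<^esub> pres_class S R v = pres_class S R (u @ v)"
  by (auto simp: presented_group_def pres_class_def intro: pres_eq.refl pres_eq.trans pres_eq_app)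

lemma pg_one: "\<one>\<^bsub>presented_group S R\<^esub> = pres_class S R []"
  by (simp add: presented_group_def)

lemma pg_carrier: "carrier (presented_group S R) = pres_class S R ` words S"
  by (simp add: presented_group_def)

definition winv :: "'a word \<Rightarrow> 'a word" where
  "winv w = rev (map (\<lambda>(x, b). (x, \<not> b)) w)"

lemma winv_words: "w \<in> words S \<Longrightarrow> winv w \<in> words S"
  by (auto simp: winv_def words_def)

lemma winv_winv: "winv (winv w) = w"
  by (induction w) (auto simp: winv_def rev_map)

lemma winv_cancel: "w \<in> words S \<Longrightarrow> pres_eq S R (w @ winv w) []"
proof (induction w)
  case Nil then show ?case by (simp add: winv_def pres_eq.refl)
next
  case (Cons a w)
  obtain x b where a: "a = (x, b)" by (cases a)
  have w: "w \<in> words S" and x: "x \<in> S" using Cons.prems a by auto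
  have "(a # w) @ winv (a # w) = [(x, b)] @ (w @ winv w) @ [(x, \<not> b)]"
    by (simp add: winv_def a)
  moreover have "pres_eq S R ([(x, b)] @ (w @ winv w) @ [(x, \<not> b)]) ([(x, b)] @ [] @ [(x, \<not> b)])"
    using Cons.IH[OF w] x by (intro pres_eq_app pres_eq.refl) auto
  moreover have "pres_eq S R ([(x, b)] @ [] @ [(x, \<not> b)]) []"
    using pres_eq.cancel[of "[]" S "[]" x R b] x by simp
  ultimately show ?case by (metis pres_eq.trans)
qed

lemma pg_group: "group (presented_group S R)"
proof (rule groupI)
  fix x y assume "x \<in> carrier (presented_group S R)" "y \<in> carrier (presented_group S R)"
  then show "x \<otimes>\<^bsub>presented_group S R\<^esub> y \<in> carrier (presented_group S R)"
    by (auto simp: pg_carrier pg_mult)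
next
  show "\<one>\<^bsub>presented_group S R\<^esub> \<in> carrier (presented_group S R)"
    by (auto simp: pg_carrier pg_one)
next
  fix x y z assume "x \<in> carrier (presented_group S R)" "y \<in> carrier (presented_group S R)"
     "z \<in> carrier (presented_group S R)"
  then show "x \<otimes>\<^bsub>presented_group S R\<^esub> y \<otimes>\<^bsub>presented_group S R\<^esub> z =
             x \<otimes>\<^bsub>presented_group S R\<^esub> (y \<otimes>\<^bsub>presented_group S R\<^esub> z)"
    by (auto simp: pg_carrier pg_mult)
next
  fix x assume "x \<in> carrier (presented_group S R)"
  then show "\<one>\<^bsub>presented_group S R\<^esub> \<otimes>\<^bsub>presented_group S R\<^esub> x = x"
    by (auto simp: pg_carrier pg_mult pg_one)
next
  fix x assume "x \<in> carrier (presented_group S R)"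
  then obtain w where w: "w \<in> words S" and x: "x = pres_class S R w" by (auto simp: pg_carrier)
  have "pres_class S R (winv w) \<otimes>\<^bsub>presented_group S R\<^esub> x = pres_class S R []"
    using winv_cancel[OF winv_words[OF w], of R] w x winv_words[OF w]
    by (simp add: pg_mult winv_winv class_eq_iff)
  then show "\<exists>y\<in>carrier (presented_group S R). y \<otimes>\<^bsub>presented_group S R\<^esub> x = \<one>\<^bsub>presented_group S R\<^esub>"
    using winv_words[OF w] by (auto simp: pg_carrier pg_one)
qed

lemma pg_inv: "x \<in> S \<Longrightarrow> inv\<^bsub>presented_group S R\<^esub> (pres_class S R [(x, b)]) = pres_class S R [(x, \<not> b)]"
proof (rule group.inv_equality[OF pg_group])
  assume x: "x \<in> S"
  have "pres_eq S R ([(x, \<not> b), (x, \<not> \<not> b)]) []"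
    using pres_eq.cancel[of "[]" S "[]" x R "\<not> b"] x by simp
  then show "pres_class S R [(x, \<not> b)] \<otimes>\<^bsub>presented_group S R\<^esub> pres_class S R [(x, b)] = \<one>\<^bsub>presented_group S R\<^esub>"
    using x by (simp add: pg_mult pg_one class_eq_iff)
qed (auto simp: pg_carrier)


definition esum :: "'a word \<Rightarrow> int" where
  "esum w = sum_list (map (\<lambda>(x, b). if b then -1 else 1) w)"

lemma ex_append[simp]: "esum (u @ v) = esum u + esum v" by (simp add: esum_def)
lemma ex_Cons[simp]: "esum ((x, b) # v) = (if b then -1 else 1) + esum v" by (simp add: esum_def)
lemma ex_Nil[simp]: "esum [] = 0" by (simp add: esum_def)

lemma esum_pres: "pres_eq S R u v \<Longrightarrow> (\<And>l r. (l, r) \<in> R \<Longrightarrow> esum l = esum r) \<Longrightarrow> esum u = esum v"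
  by (induction rule: pres_eq.induct) auto

definition Esum :: "'a word set \<Rightarrow> int" where
  "Esum A = the_elem (esum ` A)"

lemma Esum_class: "w \<in> words S \<Longrightarrow> (\<And>l r. (l, r) \<in> R \<Longrightarrow> esum l = esum r) \<Longrightarrow> Esum (pres_class S R w) = esum w"
proof -
  assume w: "w \<in> words S" and R: "\<And>l r. (l, r) \<in> R \<Longrightarrow> esum l = esum r"
  have "esum ` pres_class S R w = {esum w}"
    using w esum_pres[OF _ R] by (auto simp: pres_class_def intro: pres_eq.refl)
  then show ?thesis by (simp add: Esum_def)
qed

lemma Esum_hom: "(\<And>l r. (l, r) \<in> R \<Longrightarrow> esum l = esum r) \<Longrightarrow> Esum \<in> hom (presented_group S R) integer_group"
  by (rule homI) (auto simp: pg_carrier pg_mult Esum_class)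

lemma (in group) step_lemma:
  assumes E: "E \<in> hom G integer_group" and t: "t \<in> carrier G" and y: "y \<in> carrier G" and Ey: "E y = 1"
    and yt: "y \<otimes> inv t \<in> derived G (carrier G)"
    and x: "x \<in> carrier G" and A: "x \<otimes> t [^] (- E x) \<in> derived G (carrier G)"
  shows "(y \<otimes> x) \<otimes> t [^] (- E (y \<otimes> x)) \<in> derived G (carrier G)"
    and "(inv y \<otimes> x) \<otimes> t [^] (- E (inv y \<otimes> x)) \<in> derived G (carrier G)"
proof -
  define D where "D = derived G (carrier G)"
  interpret EH: group_hom G integer_group E using E by (simp add: group_hom_def group_hom_axioms_def is_group)
  interpret DN: normal D G unfolding D_def by (rule derived_self_is_normal)
  define q where "q = t [^] (- E x)"
  have q: "q \<in> carrier G" using t by (simp add: q_def)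
  have "t [^] (- E (y \<otimes> x)) = q \<otimes> inv t"
    proof -
    have "- E (y \<otimes> x) = - E x + - 1" using x y Ey by simp
    then show ?thesis using int_pow_mult[OF t, of "- E x" "- 1"] int_pow_neg[OF t, of 1] t
      by (simp add: q_def)
  qed
  then have "(y \<otimes> x) \<otimes> t [^] (- E (y \<otimes> x)) = (y \<otimes> (x \<otimes> q) \<otimes> inv y) \<otimes> (y \<otimes> inv t)"
    using x y t q by (simp add: m_assoc)
  moreover have "y \<otimes> (x \<otimes> q) \<otimes> inv y \<in> D"
    using DN.inv_op_closed2[OF y] A by (simp add: q_def D_def)
  ultimately show "(y \<otimes> x) \<otimes> t [^] (- E (y \<otimes> x)) \<in> derived G (carrier G)"
    using yt DN.m_closed D_def by metis
  have "t [^] (- E (inv y \<otimes> x)) = q \<otimes> t"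
    proof -
    have "- E (inv y \<otimes> x) = - E x + 1" using x y Ey by simp
    then show ?thesis using int_pow_mult[OF t, of "- E x" "1"] t
      by (simp add: q_def)
  qed
  then have "(inv y \<otimes> x) \<otimes> t [^] (- E (inv y \<otimes> x)) = (inv y \<otimes> (x \<otimes> q) \<otimes> y) \<otimes> (inv y \<otimes> inv (y \<otimes> inv t) \<otimes> y)"
    using x y t q by (simp add: m_assoc inv_mult_group)
  moreover have "inv y \<otimes> (x \<otimes> q) \<otimes> y \<in> D"
    using DN.inv_op_closed1[OF y] A by (simp add: q_def D_def)
  moreover have "inv y \<otimes> inv (y \<otimes> inv t) \<otimes> y \<in> D"
    using DN.inv_op_closed1[OF y] DN.m_inv_closed yt by (simp add: D_def)
  ultimately show "(inv y \<otimes> x) \<otimes> t [^] (- E (inv y \<otimes> x)) \<in> derived G (carrier G)"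
    using DN.m_closed D_def by metis
qed


theorem proposition2p15:
  fixes G :: "('a, 'b) monoid_scheme" and Ocl :: "'a set"
  assumes "equipped_group G Ocl"
    and "generate G Ocl = carrier G"
    and "\<exists>g\<in>carrier G. Ocl = conj_class G g"
  shows "\<exists>\<phi>. \<phi> \<in> hom integer_group
              (AutoGroup ((C_group G Ocl)\<lparr>carrier := derived (C_group G Ocl) (carrier (C_group G Ocl))\<rparr>))
           \<and> C_group G Ocl \<cong>
             semidirect_product
               ((C_group G Ocl)\<lparr>carrier := derived (C_group G Ocl) (carrier (C_group G Ocl))\<rparr>)
               integer_group \<phi>"
proof -
  define R where "R = C_group_rels G Ocl"
  define C where "C = C_group G Ocl"
  have Cdef: "C = presented_group Ocl R" by (simp add: C_def C_group_def R_def)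
  interpret C: group C using pg_group Cdef by simp
  have grpG: "group G" using assms(1) by (simp add: equipped_group_def)
  interpret G: group G by (rule grpG)
  obtain g0 where g0: "g0 \<in> carrier G" "Ocl = conj_class G g0" using assms(3) by blast
  have Osub: "Ocl \<subseteq> carrier G" using g0 by (auto simp: conj_class_def)
  have g0O: "g0 \<in> Ocl"
    using g0 unfolding conj_class_def by (auto intro!: exI[of _ "\<one>\<^bsub>G\<^esub>"])
  have Oconj: "inv\<^bsub>G\<^esub> k \<otimes>\<^bsub>G\<^esub> z \<otimes>\<^bsub>G\<^esub> k \<in> Ocl" if k: "k \<in> carrier G" and z: "z \<in> Ocl" for k z
  proof -
    obtain h where h: "h \<in> carrier G" "z = inv\<^bsub>G\<^esub> h \<otimes>\<^bsub>G\<^esub> g0 \<otimes>\<^bsub>G\<^esub> h"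
      using z g0 by (auto simp: conj_class_def)
    have "inv\<^bsub>G\<^esub> k \<otimes>\<^bsub>G\<^esub> z \<otimes>\<^bsub>G\<^esub> k = inv\<^bsub>G\<^esub> (h \<otimes>\<^bsub>G\<^esub> k) \<otimes>\<^bsub>G\<^esub> g0 \<otimes>\<^bsub>G\<^esub> (h \<otimes>\<^bsub>G\<^esub> k)"
      using h k g0 by (simp add: G.m_assoc G.inv_mult_group)
    then show ?thesis using h k g0 by (auto simp: conj_class_def)
  qed
  have Rex: "esum l = esum r" if "(l, r) \<in> R" for l r
    using that by (auto simp: R_def C_group_rels_def)
  define Y where "Y z = pres_class Ocl R [(z, False)]" for z
  have Yc: "Y z \<in> carrier C" if "z \<in> Ocl" for z
    using that by (auto simp: Cdef pg_carrier Y_def)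
  have Yinv: "inv\<^bsub>C\<^esub> (Y z) = pres_class Ocl R [(z, True)]" if "z \<in> Ocl" for z
    using pg_inv[OF that, of R False] by (simp add: Cdef Y_def)
  have Yrel: "Y (inv\<^bsub>G\<^esub> h \<otimes>\<^bsub>G\<^esub> g \<otimes>\<^bsub>G\<^esub> h) = inv\<^bsub>C\<^esub> (Y h) \<otimes>\<^bsub>C\<^esub> Y g \<otimes>\<^bsub>C\<^esub> Y h"
    if g: "g \<in> Ocl" and h: "h \<in> Ocl" for g h
  proof -
    have "inv\<^bsub>C\<^esub> (Y h) \<otimes>\<^bsub>C\<^esub> Y g \<otimes>\<^bsub>C\<^esub> Y h = pres_class Ocl R [(h, True), (g, False), (h, False)]"
      unfolding Yinv[OF h] using g h by (simp add: Y_def Cdef pg_mult)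
    moreover have "pres_eq Ocl R [(h, True), (g, False), (h, False)] [(inv\<^bsub>G\<^esub> h \<otimes>\<^bsub>G\<^esub> g \<otimes>\<^bsub>G\<^esub> h, False)]"
      using pres_eq.rel[of "[(h, True), (g, False), (h, False)]" "[(inv\<^bsub>G\<^esub> h \<otimes>\<^bsub>G\<^esub> g \<otimes>\<^bsub>G\<^esub> h, False)]" R Ocl "[]" "[]"]
        g h Oconj[of h g] Osub
      by (auto simp: R_def C_group_rels_def)
    ultimately show ?thesis
      using g h class_eq_iff[of "[(h, True), (g, False), (h, False)]" Ocl R] unfolding Y_def by auto
  qed
  have conjY: "\<forall>z\<in>Ocl. \<exists>c\<in>carrier C. Y (inv\<^bsub>G\<^esub> h \<otimes>\<^bsub>G\<^esub> z \<otimes>\<^bsub>G\<^esub> h) = inv\<^bsub>C\<^esub> c \<otimes>\<^bsub>C\<^esub> Y z \<otimes>\<^bsub>C\<^esub> c"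
    if "h \<in> generate G Ocl" for h
    using that
  proof (induction rule: generate.induct)
    case one
    show ?case
    proof
      fix z assume z: "z \<in> Ocl"
      show "\<exists>c\<in>carrier C. Y (inv\<^bsub>G\<^esub> \<one>\<^bsub>G\<^esub> \<otimes>\<^bsub>G\<^esub> z \<otimes>\<^bsub>G\<^esub> \<one>\<^bsub>G\<^esub>) = inv\<^bsub>C\<^esub> c \<otimes>\<^bsub>C\<^esub> Y z \<otimes>\<^bsub>C\<^esub> c"
        using z Osub Yc[OF z] by (intro bexI[of _ "\<one>\<^bsub>C\<^esub>"]) auto
    qed
  next
    case (incl h)
    show ?case
    proof
      fix z assume z: "z \<in> Ocl"
      show "\<exists>c\<in>carrier C. Y (inv\<^bsub>G\<^esub> h \<otimes>\<^bsub>G\<^esub> z \<otimes>\<^bsub>G\<^esub> h) = inv\<^bsub>C\<^esub> c \<otimes>\<^bsub>C\<^esub> Y z \<otimes>\<^bsub>C\<^esub> c"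
        using z incl Yc Yrel by blast
    qed
  next
    case (inv h)
    show ?case
    proof
      fix z assume z: "z \<in> Ocl"
      have hc: "h \<in> carrier G" using inv Osub by blast
      define z' where "z' = h \<otimes>\<^bsub>G\<^esub> z \<otimes>\<^bsub>G\<^esub> inv\<^bsub>G\<^esub> h"
      have z'O: "z' \<in> Ocl" using Oconj[of "inv\<^bsub>G\<^esub> h" z] hc z by (simp add: z'_def)
      have zz: "inv\<^bsub>G\<^esub> h \<otimes>\<^bsub>G\<^esub> z' \<otimes>\<^bsub>G\<^esub> h = z"
        using hc z Osub by (auto simp: z'_def G.m_assoc)
      have "Y z = inv\<^bsub>C\<^esub> (Y h) \<otimes>\<^bsub>C\<^esub> Y z' \<otimes>\<^bsub>C\<^esub> Y h"
        using Yrel[OF z'O inv] zz by simp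
      then have "Y z' = Y h \<otimes>\<^bsub>C\<^esub> Y z \<otimes>\<^bsub>C\<^esub> inv\<^bsub>C\<^esub> (Y h)"
        using Yc[OF z'O] Yc[OF inv] Yc[OF z] by (simp add: C.m_assoc)
      moreover have "inv\<^bsub>G\<^esub> (inv\<^bsub>G\<^esub> h) \<otimes>\<^bsub>G\<^esub> z \<otimes>\<^bsub>G\<^esub> inv\<^bsub>G\<^esub> h = z'"
        using hc by (simp add: z'_def)
      ultimately show "\<exists>c\<in>carrier C. Y (inv\<^bsub>G\<^esub> (inv\<^bsub>G\<^esub> h) \<otimes>\<^bsub>G\<^esub> z \<otimes>\<^bsub>G\<^esub> inv\<^bsub>G\<^esub> h) = inv\<^bsub>C\<^esub> c \<otimes>\<^bsub>C\<^esub> Y z \<otimes>\<^bsub>C\<^esub> c"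
        using Yc[OF inv] by (intro bexI[of _ "inv\<^bsub>C\<^esub> (Y h)"]) auto
    qed
  next
    case (eng h1 h2)
    have h1: "h1 \<in> carrier G" and h2: "h2 \<in> carrier G"
      using eng.hyps G.generate_in_carrier[OF Osub] by auto
    show ?case
    proof
      fix z assume z: "z \<in> Ocl"
      define z1 where "z1 = inv\<^bsub>G\<^esub> h1 \<otimes>\<^bsub>G\<^esub> z \<otimes>\<^bsub>G\<^esub> h1"
      have z1O: "z1 \<in> Ocl" using Oconj[OF h1 z] by (simp add: z1_def)
      obtain c1 where c1: "c1 \<in> carrier C" "Y z1 = inv\<^bsub>C\<^esub> c1 \<otimes>\<^bsub>C\<^esub> Y z \<otimes>\<^bsub>C\<^esub> c1"
        using eng.IH(1) z by (auto simp: z1_def)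
      obtain c2 where c2: "c2 \<in> carrier C" "Y (inv\<^bsub>G\<^esub> h2 \<otimes>\<^bsub>G\<^esub> z1 \<otimes>\<^bsub>G\<^esub> h2) = inv\<^bsub>C\<^esub> c2 \<otimes>\<^bsub>C\<^esub> Y z1 \<otimes>\<^bsub>C\<^esub> c2"
        using eng.IH(2) z1O by blast
      have e: "inv\<^bsub>G\<^esub> (h1 \<otimes>\<^bsub>G\<^esub> h2) \<otimes>\<^bsub>G\<^esub> z \<otimes>\<^bsub>G\<^esub> (h1 \<otimes>\<^bsub>G\<^esub> h2) = inv\<^bsub>G\<^esub> h2 \<otimes>\<^bsub>G\<^esub> z1 \<otimes>\<^bsub>G\<^esub> h2"
        using h1 h2 z Osub by (auto simp: z1_def G.m_assoc G.inv_mult_group)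
      have "Y (inv\<^bsub>G\<^esub> (h1 \<otimes>\<^bsub>G\<^esub> h2) \<otimes>\<^bsub>G\<^esub> z \<otimes>\<^bsub>G\<^esub> (h1 \<otimes>\<^bsub>G\<^esub> h2)) =
          inv\<^bsub>C\<^esub> (c1 \<otimes>\<^bsub>C\<^esub> c2) \<otimes>\<^bsub>C\<^esub> Y z \<otimes>\<^bsub>C\<^esub> (c1 \<otimes>\<^bsub>C\<^esub> c2)"
        using c1 c2 Yc[OF z] by (simp add: e C.m_assoc C.inv_mult_group)
      then show "\<exists>c\<in>carrier C. Y (inv\<^bsub>G\<^esub> (h1 \<otimes>\<^bsub>G\<^esub> h2) \<otimes>\<^bsub>G\<^esub> z \<otimes>\<^bsub>G\<^esub> (h1 \<otimes>\<^bsub>G\<^esub> h2)) = inv\<^bsub>C\<^esub> c \<otimes>\<^bsub>C\<^esub> Y z \<otimes>\<^bsub>C\<^esub> c"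
        using c1 c2 by blast
    qed
  qed
  define t where "t = Y g0"
  have t: "t \<in> carrier C" using Yc[OF g0O] by (simp add: t_def)
  have Ehom: "Esum \<in> hom C integer_group" using Esum_hom[of R Ocl] Rex Cdef by simp
  have EY: "Esum (Y z) = 1" if "z \<in> Ocl" for z
    using Esum_class[of "[(z, False)]" Ocl R] Rex that by (simp add: Y_def)
  have Yt: "Y z \<otimes>\<^bsub>C\<^esub> inv\<^bsub>C\<^esub> t \<in> derived C (carrier C)" if z: "z \<in> Ocl" for z
  proof -
    obtain h where h: "h \<in> carrier G" "z = inv\<^bsub>G\<^esub> h \<otimes>\<^bsub>G\<^esub> g0 \<otimes>\<^bsub>G\<^esub> h"
      using z g0 by (auto simp: conj_class_def)
    obtain c where c: "c \<in> carrier C" "Y z = inv\<^bsub>C\<^esub> c \<otimes>\<^bsub>C\<^esub> t \<otimes>\<^bsub>C\<^esub> c"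
      using conjY[of h] h assms(2) g0O by (auto simp: t_def)
    have "Y z \<otimes>\<^bsub>C\<^esub> inv\<^bsub>C\<^esub> t = inv\<^bsub>C\<^esub> c \<otimes>\<^bsub>C\<^esub> t \<otimes>\<^bsub>C\<^esub> inv\<^bsub>C\<^esub> (inv\<^bsub>C\<^esub> c) \<otimes>\<^bsub>C\<^esub> inv\<^bsub>C\<^esub> t"
      using c t by simp
    then have "Y z \<otimes>\<^bsub>C\<^esub> inv\<^bsub>C\<^esub> t \<in> derived_set C (carrier C)"
      using c t by blast
    then show ?thesis unfolding derived_def by (rule generate.incl)
  qed
  have kerw: "pres_class Ocl R w \<otimes>\<^bsub>C\<^esub> t [^]\<^bsub>C\<^esub> (- Esum (pres_class Ocl R w)) \<in> derived C (carrier C)"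
    if "w \<in> words Ocl" for w
    using that
  proof (induction w)
    case Nil
    have "pres_class Ocl R [] = \<one>\<^bsub>C\<^esub>" by (simp add: Cdef pg_one)
    moreover have "Esum (pres_class Ocl R []) = 0" using Esum_class[of "[]" Ocl R] Rex by simp
    ultimately show ?case using t C.subgroup_self
      by (simp add: subgroup.one_closed[OF C.derived_is_subgroup[OF order_refl]])
  next
    case (Cons a w)
    obtain z b where a: "a = (z, b)" by (cases a)
    have z: "z \<in> Ocl" and w: "w \<in> words Ocl" using Cons.prems a by auto
    have xc: "pres_class Ocl R w \<in> carrier C" using w by (auto simp: Cdef pg_carrier)
    have split: "pres_class Ocl R (a # w) = pres_class Ocl R [(z, b)] \<otimes>\<^bsub>C\<^esub> pres_class Ocl R w"
      using z w by (simp add: Cdef pg_mult a)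
    show ?case
    proof (cases b)
      case True
      have "pres_class Ocl R [(z, b)] = inv\<^bsub>C\<^esub> (Y z)" using Yinv[OF z] True by simp
      then show ?thesis
        using C.step_lemma(2)[OF Ehom t Yc[OF z] EY[OF z] Yt[OF z] xc Cons.IH[OF w]] split by simp
    next
      case False
      have "pres_class Ocl R [(z, b)] = Y z" using False by (simp add: Y_def)
      then show ?thesis
        using C.step_lemma(1)[OF Ehom t Yc[OF z] EY[OF z] Yt[OF z] xc Cons.IH[OF w]] split by simp
    qed
  qed
  have ker: "x \<in> derived C (carrier C)" if xC: "x \<in> carrier C" and E0: "Esum x = 0" for x
  proof -
    obtain w where w: "w \<in> words Ocl" "x = pres_class Ocl R w" using xC unfolding Cdef pg_carrier by blast
    show ?thesis using kerw[OF w(1)] w(2) E0 xC by simp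
  qed
  have EYt: "Esum t = 1" using EY[OF g0O] by (simp add: t_def)
  show ?thesis using C.abstract_split[OF Ehom t EYt ker] by (simp add: C_def)
qed

end
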